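(* Let $(\Omega,\mathcal{F},\mathbb{P})$ be a nonatomic probability space, let $u:\mathbb{R}\to\mathbb{R}\cup\{-\infty\}$ be a utility function bounded from above, let $\alpha\in\mathbb{R}$ be such that $u(x)\ge\alpha$ for some $x\in\mathbb{R}$, and let $\mathcal{A}_u^\infty=\{X\in L^\infty:\mathbb{E}[u(X)]\ge\alpha\}$. Assume that either $u(x)\le\alpha$ for all $x\in\mathbb{R}$ or that $u$ attains the value $-\infty$. Then, for any traded asset $S=(S_0,S_T)$ with $S_T\in L^\infty$ such that $\rho_{\mathcal{A}_u^\infty,S}$ is finite-valued on $L^\infty$, we have $\mathrm{Index}_{\mathrm{fin}}(\rho_{\mathcal{A}_u^\infty,S})=\infty$.
   Context: A utility function is a nonconstant, increasing, concave function $u:\mathbb{R}\to\mathbb{R}\cup\{-\infty\}$. A traded asset is $S=(S_0,S_T)$ with $S_0>0$, $S_T\ge0$ a.s., $S_T\ne0$. For $\mathcal{B}\subset L^\infty$, $\rho_{\mathcal{B},S}(X)=\inf\{m\in\mathbb{R}:X+\frac{m}{S_0}S_T\in\mathcal{B}\}$. For a convex, law-invariant acceptance set $\mathcal{A}\subset L^\infty$ (nonempty proper, $\mathcal{A}+L^\infty_+\subset\mathcal{A}$, closed under equality in law) with $\rho_{\mathcal{A},S}$ finite-valued on $L^\infty$, the index of finiteness is $\mathrm{Index}_{\mathrm{fin}}(\rho_{\mathcal{A},S})=\inf\{p\in[1,\infty):\mathrm{Cl}_p(\mathcal{A})\text{ has nonempty interior in }L^p\}$, where $\mathrm{Cl}_p(\mathcal{A})$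 is the closure of $\mathcal{A}$ in $L^p$ and $\inf\emptyset=\infty$. *)

theory Defs
  imports "HOL-Probability.Probability"
begin

definition nonatomic :: "'a measure \<Rightarrow> bool" where
  "nonatomic M \<longleftrightarrow> (\<forall>A\<in>sets M. measure M A > 0 \<longrightarrow>
     (\<exists>B\<in>sets M. B \<subseteq> A \<and> 0 < measure M B \<and> measure M B < measure M A))"

definition utility :: "(real \<Rightarrow> ereal) \<Rightarrow> bool" where
  "utility u \<longleftrightarrow> (\<forall>x. u x \<noteq> \<infinity>) \<and> (\<exists>x y. u x \<noteq> u y) \<and> mono u \<and>
     (\<forall>x y t. 0 < t \<and> t < 1 \<longrightarrow>
        ereal t * u x + ereal (1 - t) * u y \<le> u (t * x + (1 - t) * y))"

definition Linf :: "'a measure \<Rightarrow> ('a \<Rightarrow> real) set" where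
  "Linf M = {X. X \<in> borel_measurable M \<and> (\<exists>C. AE \<omega> in M. \<bar>X \<omega>\<bar> \<le> C)}"

definition Lp :: "'a measure \<Rightarrow> real \<Rightarrow> ('a \<Rightarrow> real) set" where
  "Lp M p = {X. X \<in> borel_measurable M \<and> integrable M (\<lambda>\<omega>. \<bar>X \<omega>\<bar> powr p)}"

definition Lp_norm :: "'a measure \<Rightarrow> real \<Rightarrow> ('a \<Rightarrow> real) \<Rightarrow> real" where
  "Lp_norm M p X = (\<integral>\<omega>. \<bar>X \<omega>\<bar> powr p \<partial>M) powr (1 / p)"

definition Lp_closure :: "'a measure \<Rightarrow> real \<Rightarrow> ('a \<Rightarrow> real) set \<Rightarrow> ('a \<Rightarrow> real) set" where
  "Lp_closure M p A = {X \<in> Lp M p. \<forall>\<epsilon>>0. \<exists>Y\<in>A. Lp_norm M p (\<lambda>\<omega>. X \<omega> - Y \<omega>) < \<epsilon>}"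

definition Lp_nonempty_interior :: "'a measure \<Rightarrow> real \<Rightarrow> ('a \<Rightarrow> real) set \<Rightarrow> bool" where
  "Lp_nonempty_interior M p C \<longleftrightarrow> (\<exists>X\<in>C. \<exists>r>0. \<forall>Y\<in>Lp M p.
      Lp_norm M p (\<lambda>\<omega>. Y \<omega> - X \<omega>) < r \<longrightarrow> Y \<in> C)"

text \<open>Index of finiteness (inf of the empty set is infinity).\<close>
definition index_fin :: "'a measure \<Rightarrow> ('a \<Rightarrow> real) set \<Rightarrow> ereal" where
  "index_fin M A = Inf (ereal ` {p. 1 \<le> p \<and> Lp_nonempty_interior M p (Lp_closure M p A)})"

definition expected_utility :: "'a measure \<Rightarrow> (real \<Rightarrow> ereal) \<Rightarrow> ('a \<Rightarrow> real) \<Rightarrow> ereal" where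
  "expected_utility M u X =
     enn2ereal (\<integral>\<^sup>+ \<omega>. e2ennreal (max 0 (u (X \<omega>))) \<partial>M)
   - enn2ereal (\<integral>\<^sup>+ \<omega>. e2ennreal (max 0 (- u (X \<omega>))) \<partial>M)"

definition utility_acceptance :: "'a measure \<Rightarrow> (real \<Rightarrow> ereal) \<Rightarrow> real \<Rightarrow> ('a \<Rightarrow> real) set" where
  "utility_acceptance M u \<alpha> = {X \<in> Linf M. expected_utility M u X \<ge> ereal \<alpha>}"

definition rho :: "('a \<Rightarrow> real) set \<Rightarrow> real \<Rightarrow> ('a \<Rightarrow> real) \<Rightarrow> ('a \<Rightarrow> real) \<Rightarrow> ereal" where
  "rho B S0 ST X = Inf (ereal ` {m. (\<lambda>\<omega>. X \<omega> + (m / S0) * ST \<omega>) \<in> B})"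

definition traded_asset :: "'a measure \<Rightarrow> real \<Rightarrow> ('a \<Rightarrow> real) \<Rightarrow> bool" where
  "traded_asset M S0 ST \<longleftrightarrow> S0 > 0 \<and> ST \<in> borel_measurable M \<and>
     (AE \<omega> in M. ST \<omega> \<ge> 0) \<and> \<not> (AE \<omega> in M. ST \<omega> = 0)"

end

theory Submission imports Defs begin

lemma powr_diff_bound:
  fixes y z C p :: real
  assumes "p > 0" "\<bar>z\<bar> \<le> C"
  shows "\<bar>y - z\<bar> powr p \<le> 2 powr p * (\<bar>y\<bar> powr p + \<bar>C\<bar> powr p)"
proof -
  let ?m = "max \<bar>y\<bar> \<bar>C\<bar>"
  have "\<bar>y - z\<bar> \<le> 2 * ?m" using assms(2) by linarith
  then have "\<bar>y - z\<bar> powr p \<le> (2 * ?m) powr p" using assms(1) by (intro powr_mono2) auto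
  also have "\<dots> = 2 powr p * ?m powr p" by (simp add: powr_mult)
  also have "?m powr p \<le> \<bar>y\<bar> powr p + \<bar>C\<bar> powr p"
    by (cases "\<bar>y\<bar> \<le> \<bar>C\<bar>") (auto simp: max_def)
  then have "2 powr p * ?m powr p \<le> 2 powr p * (\<bar>y\<bar> powr p + \<bar>C\<bar> powr p)"
    by (intro mult_left_mono) auto
  finally show ?thesis .
qed

lemma Lp_minus_bounded:
  assumes "finite_measure M" "p > 0" "Y \<in> Lp M p" "Z \<in> borel_measurable M"
    "AE \<omega> in M. \<bar>Z \<omega>\<bar> \<le> C"
  shows "integrable M (\<lambda>\<omega>. \<bar>Y \<omega> - Z \<omega>\<bar> powr p)"
proof (rule Bochner_Integration.integrable_bound[where f="\<lambda>\<omega>. 2 powr p * (\<bar>Y \<omega>\<bar> powr p + \<bar>C\<bar> powr p)"])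
  have Y: "Y \<in> borel_measurable M" "integrable M (\<lambda>\<omega>. \<bar>Y \<omega>\<bar> powr p)"
    using assms(3) unfolding Lp_def by auto
  have "integrable M (\<lambda>\<omega>. \<bar>C\<bar> powr p)"
    using finite_measure.integrable_const[OF assms(1)] by blast
  then show "integrable M (\<lambda>\<omega>. 2 powr p * (\<bar>Y \<omega>\<bar> powr p + \<bar>C\<bar> powr p))"
    using Y(2) by (intro integrable_mult_right integrable_add) auto
  show "(\<lambda>\<omega>. \<bar>Y \<omega> - Z \<omega>\<bar> powr p) \<in> borel_measurable M"
    using Y(1) assms(4) by measurable
  show "AE \<omega> in M. norm (\<bar>Y \<omega> - Z \<omega>\<bar> powr p) \<le> norm (2 powr p * (\<bar>Y \<omega>\<bar> powr p + \<bar>C\<bar> powr p))"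
    using assms(5)
  proof eventually_elim
    case (elim \<omega>)
    then show ?case using powr_diff_bound[OF assms(2) elim, of "Y \<omega>"] by simp
  qed
qed

lemma eu_real:
  fixes g :: "'a \<Rightarrow> real"
  assumes "integrable M g"
  shows "enn2ereal (\<integral>\<^sup>+ \<omega>. e2ennreal (max 0 (ereal (g \<omega>))) \<partial>M)
       - enn2ereal (\<integral>\<^sup>+ \<omega>. e2ennreal (max 0 (- ereal (g \<omega>))) \<partial>M) = ereal (integral\<^sup>L M g)"
proof -
  have i1: "integrable M (\<lambda>\<omega>. max 0 (g \<omega>))" using assms by auto
  have i2: "integrable M (\<lambda>\<omega>. max 0 (- g \<omega>))" using assms by auto
  have e1: "(\<lambda>\<omega>. e2ennreal (max 0 (ereal (g \<omega>)))) = (\<lambda>\<omega>. ennreal (max 0 (g \<omega>)))"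
    by (auto simp: max_def e2ennreal_ereal zero_ereal_def)
  have e2: "(\<lambda>\<omega>. e2ennreal (max 0 (- ereal (g \<omega>)))) = (\<lambda>\<omega>. ennreal (max 0 (- g \<omega>)))"
    by (auto simp: max_def e2ennreal_ereal zero_ereal_def)
  have n1: "(\<integral>\<^sup>+ \<omega>. ennreal (max 0 (g \<omega>)) \<partial>M) = ennreal (integral\<^sup>L M (\<lambda>\<omega>. max 0 (g \<omega>)))"
    using i1 by (intro nn_integral_eq_integral) auto
  have n2: "(\<integral>\<^sup>+ \<omega>. ennreal (max 0 (- g \<omega>)) \<partial>M) = ennreal (integral\<^sup>L M (\<lambda>\<omega>. max 0 (- g \<omega>)))"
    using i2 by (intro nn_integral_eq_integral) auto
  have p1: "0 \<le> integral\<^sup>L M (\<lambda>\<omega>. max 0 (g \<omega>))" by (intro integral_nonneg_AE) auto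
  have p2: "0 \<le> integral\<^sup>L M (\<lambda>\<omega>. max 0 (- g \<omega>))" by (intro integral_nonneg_AE) auto
  have "integral\<^sup>L M g = integral\<^sup>L M (\<lambda>\<omega>. max 0 (g \<omega>) - max 0 (- g \<omega>))"
    by (intro Bochner_Integration.integral_cong) auto
  also have "\<dots> = integral\<^sup>L M (\<lambda>\<omega>. max 0 (g \<omega>)) - integral\<^sup>L M (\<lambda>\<omega>. max 0 (- g \<omega>))"
    using i1 i2 by (rule Bochner_Integration.integral_diff)
  finally show ?thesis
    unfolding e1 e2 n1 n2 using p1 p2 by (simp add: enn2ereal_ennreal)
qed


lemma threshold:
  assumes ps: "prob_space M" and ut: "utility u" and bd: "\<exists>c. \<forall>x. u x \<le> ereal c"
    and cs: "(\<forall>x. u x \<le> ereal \<alpha>) \<or> (\<exists>x. u x = -\<infinity>)"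
  shows "\<exists>t. \<forall>Z\<in>utility_acceptance M u \<alpha>. AE \<omega> in M. t < Z \<omega>"
proof -
  have mu: "mono u" using ut unfolding utility_def by auto
  obtain c where c: "\<And>x. u x \<le> ereal c" using bd by auto
  have sp1: "emeasure M (space M) = 1" using ps by (simp add: prob_space.emeasure_space_1)
  have fm: "finite_measure M" using ps by (simp add: prob_space_def)
  show ?thesis
  proof (cases "\<exists>x. u x = -\<infinity>")
    case True
    then obtain x1 where x1: "u x1 = -\<infinity>" by auto
    show ?thesis
    proof (intro exI[of _ x1] ballI)
      fix Z assume "Z \<in> utility_acceptance M u \<alpha>"
      then have Zm: "Z \<in> borel_measurable M" and E: "expected_utility M u Z \<ge> ereal \<alpha>"
        unfolding utility_acceptance_def Linf_def by auto
      define B where "B = {\<omega>\<in>space M. Z \<omega> \<le> x1}"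
      have Bs: "B \<in> sets M" unfolding B_def using Zm by measurable
      show "AE \<omega> in M. x1 < Z \<omega>"
      proof (rule ccontr)
        assume nAE: "\<not> (AE \<omega> in M. x1 < Z \<omega>)"
        have "emeasure M B \<noteq> 0"
          using nAE AE_iff_measurable[OF Bs, of "\<lambda>\<omega>. x1 < Z \<omega>"] unfolding B_def by (auto simp: not_less)
        have pw: "\<top> * indicator B \<omega> \<le> e2ennreal (max 0 (- u (Z \<omega>)))" if "\<omega> \<in> space M" for \<omega>
        proof (cases "\<omega> \<in> B")
          case True
          then have "u (Z \<omega>) \<le> u x1" using mu unfolding B_def mono_def by auto
          then have "u (Z \<omega>) = -\<infinity>" using x1 by simp
          then show ?thesis by (simp add: e2ennreal_infty)
        qed simp
        have "(\<integral>\<^sup>+ \<omega>. \<top> * indicator B \<omega> \<partial>M) \<le> (\<integral>\<^sup>+ \<omega>. e2ennreal (max 0 (- u (Z \<omega>))) \<partial>M)"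
          using pw by (intro nn_integral_mono) auto
        moreover have "(\<integral>\<^sup>+ \<omega>. \<top> * indicator B \<omega> \<partial>M) = \<top>"
          using Bs \<open>emeasure M B \<noteq> 0\<close> by (simp add: nn_integral_cmult_indicator ennreal_mult_eq_top_iff)
        ultimately have neg: "(\<integral>\<^sup>+ \<omega>. e2ennreal (max 0 (- u (Z \<omega>))) \<partial>M) = \<top>"
          using top_unique by metis
        have "(\<integral>\<^sup>+ \<omega>. e2ennreal (max 0 (u (Z \<omega>))) \<partial>M) \<le> (\<integral>\<^sup>+ \<omega>. ennreal (max 0 c) \<partial>M)"
        proof (intro nn_integral_mono)
          fix \<omega> have "max 0 (u (Z \<omega>)) \<le> max 0 (ereal c)" using c[of "Z \<omega>"] by (rule max.mono[OF order_refl])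
          also have "max 0 (ereal c) = ereal (max 0 c)" by (auto simp: max_def)
          finally have "max 0 (u (Z \<omega>)) \<le> ereal (max 0 c)" .
          then show "e2ennreal (max 0 (u (Z \<omega>))) \<le> ennreal (max 0 c)"
            using e2ennreal_mono e2ennreal_ereal by metis
        qed
        also have "\<dots> = ennreal (max 0 c)" using sp1 by simp
        finally have pos: "(\<integral>\<^sup>+ \<omega>. e2ennreal (max 0 (u (Z \<omega>))) \<partial>M) < \<top>"
          using le_less_trans by fastforce
        have "enn2ereal (\<integral>\<^sup>+ \<omega>. e2ennreal (max 0 (u (Z \<omega>))) \<partial>M) \<noteq> \<infinity>"
          using pos by (metis enn2ereal_top enn2ereal_inject less_irrefl)
        then have "expected_utility M u Z = -\<infinity>"
          unfolding expected_utility_def neg enn2ereal_top by (cases "enn2ereal (\<integral>\<^sup>+ \<omega>. e2ennreal (max 0 (u (Z \<omega>))) \<partial>M)") auto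
        then show False using E by simp
      qed
    qed
  next
    case False
    then have le: "\<And>x. u x \<le> ereal \<alpha>" using cs by auto
    obtain x y where "u x \<noteq> u y" using ut unfolding utility_def by auto
    then obtain a where a: "u a < ereal \<alpha>" using le[of x] le[of y] by (metis order.not_eq_order_implies_strict)
    have "u a \<noteq> \<infinity>" using ut unfolding utility_def by auto
    moreover have "u a \<noteq> -\<infinity>" using False by auto
    ultimately obtain d where d: "u a = ereal d" by (cases "u a") auto
    have dl: "d < \<alpha>" using a d by simp
    show ?thesis
    proof (intro exI[of _ a] ballI)
      fix Z assume "Z \<in> utility_acceptance M u \<alpha>"
      then have Zm: "Z \<in> borel_measurable M" and E: "expected_utility M u Z \<ge> ereal \<alpha>"
        unfolding utility_acceptance_def Linf_def by auto
      define B where "B = {\<omega>\<in>space M. Z \<omega> \<le> a}"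
      have Bs: "B \<in> sets M" unfolding B_def using Zm by measurable
      have Bfin: "emeasure M B < \<top>" using finite_measure.emeasure_finite[OF fm, of B] by (simp add: less_top)
      show "AE \<omega> in M. a < Z \<omega>"
      proof (rule ccontr)
        assume nAE: "\<not> (AE \<omega> in M. a < Z \<omega>)"
        have "emeasure M B \<noteq> 0"
          using nAE AE_iff_measurable[OF Bs, of "\<lambda>\<omega>. a < Z \<omega>"] unfolding B_def by (auto simp: not_less)
        then have mB: "measure M B > 0"
          using finite_measure.emeasure_eq_measure[OF fm, of B]
          by (simp add: zero_less_measure_iff)
        define g where "g \<omega> = \<alpha> - (\<alpha> - d) * indicator B \<omega>" for \<omega>
        have ig: "integrable M g" unfolding g_def
          using fm Bs by (intro Bochner_Integration.integrable_diff integrable_mult_right integrable_real_indicator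
              finite_measure.integrable_const) (auto simp: Bfin)
        have Bsub: "B \<inter> space M = B" unfolding B_def by auto
        have intg: "integral\<^sup>L M g = \<alpha> - (\<alpha> - d) * measure M B"
          unfolding g_def using fm Bs ps
          by (subst Bochner_Integration.integral_diff)
             (auto intro!: integrable_mult_right integrable_real_indicator finite_measure.integrable_const
               simp: Bfin prob_space.prob_space Bsub)
        have pw: "u (Z \<omega>) \<le> ereal (g \<omega>)" if "\<omega> \<in> space M" for \<omega>
        proof (cases "\<omega> \<in> B")
          case True
          then have "u (Z \<omega>) \<le> u a" using mu unfolding B_def mono_def by auto
          then show ?thesis using True d by (simp add: g_def)
        next
          case False then show ?thesis using le by (simp add: g_def)
        qed
        have P: "(\<integral>\<^sup>+ \<omega>. e2ennreal (max 0 (u (Z \<omega>))) \<partial>M) \<le> (\<integral>\<^sup>+ \<omega>. e2ennreal (max 0 (ereal (g \<omega>))) \<partial>M)"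
          using pw by (intro nn_integral_mono e2ennreal_mono max.mono) auto
        have N: "(\<integral>\<^sup>+ \<omega>. e2ennreal (max 0 (- ereal (g \<omega>))) \<partial>M) \<le> (\<integral>\<^sup>+ \<omega>. e2ennreal (max 0 (- u (Z \<omega>))) \<partial>M)"
          proof (intro nn_integral_mono e2ennreal_mono max.mono order_refl)
          fix \<omega> assume "\<omega> \<in> space M"
          then have "u (Z \<omega>) \<le> ereal (g \<omega>)" by (rule pw)
          then show "- ereal (g \<omega>) \<le> - u (Z \<omega>)" by (simp only: ereal_minus_le_minus)
        qed
        have "expected_utility M u Z \<le> enn2ereal (\<integral>\<^sup>+ \<omega>. e2ennreal (max 0 (ereal (g \<omega>))) \<partial>M)
           - enn2ereal (\<integral>\<^sup>+ \<omega>. e2ennreal (max 0 (- ereal (g \<omega>))) \<partial>M)"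
          unfolding expected_utility_def
          using P N by (intro ereal_minus_mono) (auto simp: less_eq_ennreal.rep_eq)
        also have "\<dots> = ereal (\<alpha> - (\<alpha> - d) * measure M B)" using eu_real[OF ig] intg by simp
        also have "\<dots> < ereal \<alpha>" using mB dl by simp
        finally show False using E by simp
      qed
    qed
  qed
qed

lemma small_set_aux:
  assumes "finite_measure M" "nonatomic M" "A \<in> sets M" "measure M A > 0"
  shows "\<exists>B\<in>sets M. B \<subseteq> A \<and> 0 < measure M B \<and> measure M B \<le> measure M A / 2^n"
proof (induction n)
  case 0 then show ?case using assms by auto
next
  case (Suc n)
  then obtain B where B: "B \<in> sets M" "B \<subseteq> A" "0 < measure M B" "measure M B \<le> measure M A / 2^n" by blast
  then obtain C where C: "C \<in> sets M" "C \<subseteq> B" "0 < measure M C" "measure M C < measure M B"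
    using assms(2) unfolding nonatomic_def by blast
  have D: "measure M (B - C) = measure M B - measure M C"
    using finite_measure.finite_measure_Diff[OF assms(1) B(1) C(1) C(2)] .
  have h: "measure M B / 2 \<le> measure M A / 2^n / 2" using B(4) by (simp add: divide_right_mono)
  show ?case
  proof (cases "measure M C \<le> measure M B / 2")
    case True
    have "measure M C \<le> measure M A / 2^n / 2" using True h by linarith
    then have "measure M C \<le> measure M A / 2^Suc n" by simp
    then show ?thesis using C B by (intro bexI[of _ C]) auto
  next
    case False
    have "measure M (B - C) \<le> measure M A / 2^n / 2" using False h D by linarith
    then have "measure M (B - C) \<le> measure M A / 2^Suc n" by simp
    moreover have "B - C \<in> sets M" using B C by auto
    ultimately show ?thesis using C B D by (intro bexI[of _ "B - C"]) auto
  qed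
qed

lemma small_set:
  assumes "finite_measure M" "nonatomic M" "A \<in> sets M" "measure M A > 0" "e > 0"
  shows "\<exists>B\<in>sets M. B \<subseteq> A \<and> 0 < measure M B \<and> measure M B < e"
proof -
  obtain n :: nat where n: "measure M A / e < 2 ^ n"
    using real_arch_pow[of 2 "measure M A / e"] by auto
  then have "measure M A < e * 2 ^ n" using assms(5) by (simp add: divide_less_eq mult.commute)
  then have lt: "measure M A / 2^n < e" by (simp add: divide_less_eq)
  obtain B where "B\<in>sets M" "B \<subseteq> A" "0 < measure M B" "measure M B \<le> measure M A / 2^n"
    using small_set_aux[OF assms(1-4), of n] by blast
  then show ?thesis using lt by (intro bexI[of _ B]) auto
qed


lemma no_interior:
  assumes ps: "prob_space M" and na: "nonatomic M" and p1: "1 \<le> p"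
    and AZ: "\<And>Z. Z \<in> A \<Longrightarrow> Z \<in> Linf M \<and> (AE \<omega> in M. t < Z \<omega>)"
  shows "\<not> Lp_nonempty_interior M p (Lp_closure M p A)"
proof
  assume "Lp_nonempty_interior M p (Lp_closure M p A)"
  then obtain X r where Xc: "X \<in> Lp_closure M p A" and r: "r > 0"
    and H: "\<And>Y. Y \<in> Lp M p \<Longrightarrow> Lp_norm M p (\<lambda>\<omega>. Y \<omega> - X \<omega>) < r \<Longrightarrow> Y \<in> Lp_closure M p A"
    unfolding Lp_nonempty_interior_def by blast
  have fm: "finite_measure M" using ps by (simp add: prob_space_def)
  have pp: "p > 0" using p1 by simp
  have XLp: "X \<in> Lp M p" using Xc unfolding Lp_closure_def by auto
  then have Xm: "X \<in> borel_measurable M" and Xi: "integrable M (\<lambda>\<omega>. \<bar>X \<omega>\<bar> powr p)"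
    unfolding Lp_def by auto
  have "\<exists>n::nat. measure M {\<omega>\<in>space M. \<bar>X \<omega>\<bar> \<le> real n} \<noteq> 0"
  proof (rule ccontr)
    assume "\<not> ?thesis"
    then have "\<forall>n::nat. AE \<omega> in M. \<not> \<bar>X \<omega>\<bar> \<le> real n"
      using prob_space.prob_Collect_eq_0[OF ps] Xm by auto
    then have "AE \<omega> in M. \<forall>n::nat. \<not> \<bar>X \<omega>\<bar> \<le> real n" by (simp add: AE_all_countable)
    then have "AE \<omega> in M. False" by eventually_elim (metis real_arch_simple not_less)
    then show False using AE_iff_measurable[of "space M" M "\<lambda>_. False"] prob_space.emeasure_space_1[OF ps] by auto
  qed
  then obtain n :: nat where n: "measure M {\<omega>\<in>space M. \<bar>X \<omega>\<bar> \<le> real n} \<noteq> 0" by blast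
  define K where "K = real n"
  define D where "D = {\<omega>\<in>space M. \<bar>X \<omega>\<bar> \<le> K}"
  have Ds: "D \<in> sets M" unfolding D_def using Xm by measurable
  have mD: "measure M D > 0" using n unfolding D_def K_def by (simp add: zero_less_measure_iff)
  define L where "L = K + \<bar>t\<bar> + 1"
  have L0: "L > 0" unfolding L_def K_def by simp
  define e where "e = (r / L) powr p"
  have e0: "e > 0" unfolding e_def using r L0 by simp
  obtain B where Bs: "B \<in> sets M" and BD: "B \<subseteq> D" and mB: "0 < measure M B" and mBe: "measure M B < e"
    using small_set[OF fm na Ds mD e0] by blast
  have Bsp: "B \<subseteq> space M" using BD unfolding D_def by auto
  have Bint: "B \<inter> space M = B" using Bsp by auto
  have Bfin: "emeasure M B < \<top>" using finite_measure.emeasure_finite[OF fm, of B] by (simp add: less_top)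
  define Y where "Y \<omega> = (if \<omega> \<in> B then t - 1 else X \<omega>)" for \<omega>
  have Ym: "Y \<in> borel_measurable M" unfolding Y_def
    using Bs Xm by (intro measurable_If_set) auto
  have YLp: "Y \<in> Lp M p"
    unfolding Lp_def
  proof (intro CollectI conjI Ym)
    show "integrable M (\<lambda>\<omega>. \<bar>Y \<omega>\<bar> powr p)"
    proof (rule Bochner_Integration.integrable_bound[where f="\<lambda>\<omega>. \<bar>X \<omega>\<bar> powr p + \<bar>t - 1\<bar> powr p"])
      show "integrable M (\<lambda>\<omega>. \<bar>X \<omega>\<bar> powr p + \<bar>t - 1\<bar> powr p)"
        using Xi finite_measure.integrable_const[OF fm] by (intro Bochner_Integration.integrable_add) auto
      show "(\<lambda>\<omega>. \<bar>Y \<omega>\<bar> powr p) \<in> borel_measurable M" using Ym by measurable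
      show "AE \<omega> in M. norm (\<bar>Y \<omega>\<bar> powr p) \<le> norm (\<bar>X \<omega>\<bar> powr p + \<bar>t - 1\<bar> powr p)"
        by (intro AE_I2) (auto simp: Y_def)
    qed
  qed
  have Ynorm: "Lp_norm M p (\<lambda>\<omega>. Y \<omega> - X \<omega>) < r"
  proof -
    let ?h = "\<lambda>\<omega>. \<bar>Y \<omega> - X \<omega>\<bar> powr p"
    have hb: "?h \<omega> \<le> L powr p * indicator B \<omega>" if "\<omega> \<in> space M" for \<omega>
    proof (cases "\<omega> \<in> B")
      case True
      then have "\<bar>X \<omega>\<bar> \<le> K" using BD unfolding D_def by auto
      then have "\<bar>Y \<omega> - X \<omega>\<bar> \<le> L" using True unfolding Y_def L_def by auto
      then show ?thesis using True pp by (simp add: powr_mono2)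
    next
      case False then show ?thesis by (simp add: Y_def)
    qed
    have hm: "?h \<in> borel_measurable M" using Ym Xm by measurable
    have ih: "integrable M ?h"
    proof (rule Bochner_Integration.integrable_bound[where f="\<lambda>\<omega>. L powr p"])
      show "integrable M (\<lambda>\<omega>. L powr p)" using finite_measure.integrable_const[OF fm] by auto
      show "?h \<in> borel_measurable M" by (rule hm)
      show "AE \<omega> in M. norm (?h \<omega>) \<le> norm (L powr p)"
      proof (intro AE_I2)
        fix \<omega> assume "\<omega> \<in> space M"
        then have "?h \<omega> \<le> L powr p * indicator B \<omega>" by (rule hb)
        also have "\<dots> \<le> L powr p" by (simp add: indicator_def)
        finally show "norm (?h \<omega>) \<le> norm (L powr p)" by simp
      qed
    qed
    have "integral\<^sup>L M ?h \<le> integral\<^sup>L M (\<lambda>\<omega>. L powr p * indicator B \<omega>)"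
      using ih hb Bs Bfin by (intro integral_mono integrable_mult_right integrable_real_indicator) auto
    also have "\<dots> = L powr p * measure M B" by (simp add: Bint)
    finally have I: "integral\<^sup>L M ?h \<le> L powr p * measure M B" .
    have I0: "0 \<le> integral\<^sup>L M ?h" by (intro integral_nonneg_AE) auto
    have "Lp_norm M p (\<lambda>\<omega>. Y \<omega> - X \<omega>) = integral\<^sup>L M ?h powr (1 / p)" unfolding Lp_norm_def ..
    also have "\<dots> \<le> (L powr p * measure M B) powr (1 / p)" using I I0 pp by (intro powr_mono2) auto
    also have "\<dots> < (L powr p * e) powr (1 / p)" using mBe pp L0 mB by (intro powr_less_mono2) auto
    also have "L powr p * e = (L * (r / L)) powr p" unfolding e_def using L0 r by (simp only: powr_mult[symmetric] less_imp_le divide_nonneg_pos)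
    also have "\<dots> = r powr p" using L0 by simp
    also have "(r powr p) powr (1 / p) = r" using r pp by (simp add: powr_powr)
    finally show ?thesis .
  qed
  have "Y \<notin> Lp_closure M p A"
  proof
    assume "Y \<in> Lp_closure M p A"
    moreover have "measure M B powr (1 / p) > 0" using mB by simp
    ultimately obtain Z where ZA: "Z \<in> A" and Zn: "Lp_norm M p (\<lambda>\<omega>. Y \<omega> - Z \<omega>) < measure M B powr (1 / p)"
      unfolding Lp_closure_def by blast
    have "Z \<in> Linf M" and Zt: "AE \<omega> in M. t < Z \<omega>" using AZ[OF ZA] by auto
    then obtain C where Zm: "Z \<in> borel_measurable M" and ZC: "AE \<omega> in M. \<bar>Z \<omega>\<bar> \<le> C"
      unfolding Linf_def by auto
    have iYZ: "integrable M (\<lambda>\<omega>. \<bar>Y \<omega> - Z \<omega>\<bar> powr p)" by (rule Lp_minus_bounded[OF fm pp YLp Zm ZC])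
    have "AE \<omega> in M. indicator B \<omega> \<le> \<bar>Y \<omega> - Z \<omega>\<bar> powr p"
      using Zt
    proof eventually_elim
      case (elim \<omega>)
      show ?case
      proof (cases "\<omega> \<in> B")
        case True
        then have "1 \<le> \<bar>Y \<omega> - Z \<omega>\<bar>" using elim unfolding Y_def by auto
        then have "1 \<le> \<bar>Y \<omega> - Z \<omega>\<bar> powr p" using pp by (intro ge_one_powr_ge_zero) auto
        then show ?thesis using True by simp
      next
        case False then show ?thesis by simp
      qed
    qed
    then have "integral\<^sup>L M (indicator B) \<le> integral\<^sup>L M (\<lambda>\<omega>. \<bar>Y \<omega> - Z \<omega>\<bar> powr p)"
      using iYZ Bs Bfin by (intro integral_mono_AE integrable_real_indicator) auto
    then have "measure M B \<le> integral\<^sup>L M (\<lambda>\<omega>. \<bar>Y \<omega> - Z \<omega>\<bar> powr p)" by (simp add: Bint)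
    then have "measure M B powr (1 / p) \<le> Lp_norm M p (\<lambda>\<omega>. Y \<omega> - Z \<omega>)"
      unfolding Lp_norm_def using pp by (intro powr_mono2) auto
    then show False using Zn by simp
  qed
  then show False using H[OF YLp Ynorm] by simp
qed

theorem corollary6p4:
  fixes M :: "'a measure" and u :: "real \<Rightarrow> ereal" and \<alpha> S0 :: real and ST :: "'a \<Rightarrow> real"
  assumes "prob_space M" and "nonatomic M"
    and "utility u" and "\<exists>c. \<forall>x. u x \<le> ereal c"
    and "\<exists>x. u x \<ge> ereal \<alpha>"
    and "(\<forall>x. u x \<le> ereal \<alpha>) \<or> (\<exists>x. u x = -\<infinity>)"
    and "traded_asset M S0 ST" and "ST \<in> Linf M"
    and "\<forall>X\<in>Linf M. \<bar>rho (utility_acceptance M u \<alpha>) S0 ST X\<bar> \<noteq> \<infinity>"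
  shows "index_fin M (utility_acceptance M u \<alpha>) = \<infinity>"
proof -
  obtain t where t: "\<forall>Z\<in>utility_acceptance M u \<alpha>. AE \<omega> in M. t < Z \<omega>"
    using threshold[OF assms(1) assms(3) assms(4) assms(6)] by blast
  have AZ: "\<And>Z. Z \<in> utility_acceptance M u \<alpha> \<Longrightarrow> Z \<in> Linf M \<and> (AE \<omega> in M. t < Z \<omega>)"
    using t unfolding utility_acceptance_def by auto
  have E0: "{p. 1 \<le> p \<and> Lp_nonempty_interior M p (Lp_closure M p (utility_acceptance M u \<alpha>))} = {}"
    using no_interior[OF assms(1) assms(2) _ AZ] by blast
  show ?thesis unfolding index_fin_def E0 by (simp add: top_ereal_def)
qed

end
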